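(* Let $r, n, q$ be positive integers and $t_1,\dots,t_q$ positive integers. Suppose that for each $i\in[q]$ there exists a collection of $n$ matchings, each of size $t_i$, in an $r$-partite $r$-uniform hypergraph $H_i$ that does not admit a rainbow matching of size $t_i$. Then there exists a collection of $n$ matchings, each of size $\sum_{i=1}^q t_i$, in an $r$-partite $r$-uniform hypergraph $H$ that does not admit a rainbow matching of size $\sum_{i=1}^q t_i-q+1$.
   Context: A hypergraph is $r$-uniform if every edge contains exactly $r$ vertices. An $r$-uniform hypergraph is $r$-partite if its vertex set can be partitioned into $r$ sets $V_1,\dots,V_r$ such that every edge contains exactly one vertex from each $V_i$. A matching is a set of pairwise vertex-disjoint edges. Given a collection (repetitions allowed) of matchings $M_1,\dots,M_n$ in a hypergraph, a matching $M\subseteq \bigcup_{i=1}^n M_i$ is rainbow if there is an injection $\phi:M\to[n]$ such that every edge $e\in M$ belongs to $M_{\phi(e)}$. *)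

theory Defs
  imports Main
begin

definition r_partite_uniform :: "nat \<Rightarrow> 'v set set \<Rightarrow> bool" where
  "r_partite_uniform r H \<longleftrightarrow>
     (\<exists>V :: nat \<Rightarrow> 'v set.
        (\<forall>i<r. \<forall>j<r. i \<noteq> j \<longrightarrow> V i \<inter> V j = {}) \<and>
        (\<forall>e\<in>H. e \<subseteq> (\<Union>i<r. V i) \<and> (\<forall>i<r. card (e \<inter> V i) = 1)))"

definition matching :: "'v set set \<Rightarrow> bool" where
  "matching M \<longleftrightarrow> (\<forall>e\<in>M. \<forall>f\<in>M. e \<noteq> f \<longrightarrow> e \<inter> f = {})"

definition matching_collection :: "'v set set \<Rightarrow> nat \<Rightarrow> (nat \<Rightarrow> 'v set set) \<Rightarrow> nat \<Rightarrow> bool" where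
  "matching_collection H n Ms t \<longleftrightarrow>
     (\<forall>i<n. Ms i \<subseteq> H \<and> matching (Ms i) \<and> finite (Ms i) \<and> card (Ms i) = t)"

definition rainbow_matching :: "nat \<Rightarrow> (nat \<Rightarrow> 'v set set) \<Rightarrow> 'v set set \<Rightarrow> bool" where
  "rainbow_matching n Ms M \<longleftrightarrow>
     matching M \<and> M \<subseteq> (\<Union>i<n. Ms i) \<and>
     (\<exists>\<phi> :: 'v set \<Rightarrow> nat. inj_on \<phi> M \<and> (\<forall>e\<in>M. \<phi> e < n \<and> e \<in> Ms (\<phi> e)))"

definition has_rainbow_matching_of_size :: "nat \<Rightarrow> (nat \<Rightarrow> 'v set set) \<Rightarrow> nat \<Rightarrow> bool" where
  "has_rainbow_matching_of_size n Ms s \<longleftrightarrow>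
     (\<exists>M. rainbow_matching n Ms M \<and> finite M \<and> card M = s)"

end

theory Submission
  imports Defs
begin

definition tg :: "nat \<Rightarrow> 'v set \<Rightarrow> ('v \<times> nat) set" where
  "tg i e = (\<lambda>v. (v, i)) ` e"

lemma tg_eq: "tg i a = tg k b \<Longrightarrow> a \<noteq> {} \<Longrightarrow> i = k \<and> a = b"
proof -
  assume h: "tg i a = tg k b" and ne: "a \<noteq> {}"
  obtain x where x: "x \<in> a" using ne by blast
  then have "(x, i) \<in> tg k b" using h unfolding tg_def by blast
  then have ik: "i = k" unfolding tg_def by blast
  have "a = fst ` tg i a" unfolding tg_def by force
  also have "\<dots> = b" using h ik unfolding tg_def by force
  finally show ?thesis using ik by blast
qed

lemma tg_inj: "inj (tg i)"
  unfolding tg_def by (rule injI) (auto simp: set_eq_iff)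

lemma card_tg: "card (tg i X) = card X"
  unfolding tg_def by (simp add: card_image inj_on_def)

lemma tg_int_UN: "i < q \<Longrightarrow> tg i a \<inter> (\<Union>i'<q. tg i' (B i')) = tg i (a \<inter> B i)"
  unfolding tg_def by auto

lemma tg_sub_UN: "i < q \<Longrightarrow> a \<subseteq> (\<Union>k<r. B i k) \<Longrightarrow> tg i a \<subseteq> (\<Union>k<r. \<Union>i'<q. tg i' (B i' k))"
  unfolding tg_def by blast

lemma tg_int: "tg i a \<inter> tg i b = tg i (a \<inter> b)"
  unfolding tg_def by auto

lemma fst_tg: "fst ` tg i a = a"
  unfolding tg_def by force

lemma rainbow_subset:
  assumes "rainbow_matching n Ms M" "N \<subseteq> M"
  shows "rainbow_matching n Ms N"
  using assms unfolding rainbow_matching_def matching_def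
  by (meson inj_on_subset subsetD order_trans)

lemma has_rainbow_le:
  assumes "rainbow_matching n Ms M" "finite M" "card M \<ge> s"
  shows "has_rainbow_matching_of_size n Ms s"
proof -
  obtain N where "N \<subseteq> M" "card N = s" using obtain_subset_with_card_n[OF assms(3)] by blast
  then show ?thesis unfolding has_rainbow_matching_of_size_def
    using rainbow_subset[OF assms(1)] finite_subset assms(2) by blast
qed

lemma edges_nonempty:
  assumes "r_partite_uniform r H" "r > 0" "e \<in> H"
  shows "e \<noteq> {}"
  using assms unfolding r_partite_uniform_def by force

theorem lemma2p4:
  fixes r n q :: nat and t :: "nat \<Rightarrow> nat"
  assumes "r > 0" and "n > 0" and "q > 0"
    and "\<forall>i<q. t i > 0"
    and "\<forall>i<q. \<exists>(Hi :: 'v set set) Ms.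
           r_partite_uniform r Hi \<and> matching_collection Hi n Ms (t i) \<and>
           \<not> has_rainbow_matching_of_size n Ms (t i)"
  shows "\<exists>(H :: ('v \<times> nat) set set) Ms.
           r_partite_uniform r H \<and> matching_collection H n Ms (\<Sum>i<q. t i) \<and>
           \<not> has_rainbow_matching_of_size n Ms ((\<Sum>i<q. t i) + 1 - q)"
proof -
  obtain HH MM where HM: "\<And>i. i < q \<Longrightarrow> r_partite_uniform r (HH i :: 'v set set) \<and>
      matching_collection (HH i) n (MM i) (t i) \<and> \<not> has_rainbow_matching_of_size n (MM i) (t i)"
    using assms(5) by metis
  have ne: "\<And>i j a. i < q \<Longrightarrow> j < n \<Longrightarrow> a \<in> MM i j \<Longrightarrow> a \<noteq> {}"
    using HM edges_nonempty[OF _ assms(1)] unfolding matching_collection_def by blast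
  define H where "H = (\<Union>i<q. tg i ` HH i)"
  define Ms where "Ms = (\<lambda>j. \<Union>i<q. tg i ` MM i j)"
  have rp: "r_partite_uniform r H"
  proof -
    define P where "P = (\<lambda>(V::nat \<Rightarrow> 'v set) (E::'v set set).
        (\<forall>k<r. \<forall>l<r. k \<noteq> l \<longrightarrow> V k \<inter> V l = {}) \<and>
        (\<forall>e\<in>E. e \<subseteq> (\<Union>k<r. V k) \<and> (\<forall>k<r. card (e \<inter> V k) = 1)))"
    have "\<forall>i\<in>{..<q}. \<exists>V. P V (HH i)"
      using HM unfolding r_partite_uniform_def P_def by blast
    then obtain VV where VV0: "\<forall>i\<in>{..<q}. P (VV i) (HH i)"
      using bchoice[of "{..<q}" "\<lambda>i V. P V (HH i)"] by blast
    have VV: "\<And>i. i < q \<Longrightarrow>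
        (\<forall>k<r. \<forall>l<r. k \<noteq> l \<longrightarrow> VV i k \<inter> VV i l = {}) \<and>
        (\<forall>e\<in>HH i. e \<subseteq> (\<Union>k<r. VV i k) \<and> (\<forall>k<r. card (e \<inter> VV i k) = 1))"
      using VV0 unfolding P_def by simp
    define V where "V = (\<lambda>k. \<Union>i<q. tg i (VV i k))"
    have d: "\<forall>k<r. \<forall>l<r. k \<noteq> l \<longrightarrow> V k \<inter> V l = {}"
    proof (intro allI impI)
      fix k l assume "k < r" "l < r" "k \<noteq> l"
      show "V k \<inter> V l = {}"
      proof (rule ccontr)
        assume "V k \<inter> V l \<noteq> {}"
        then obtain x where x: "x \<in> V k" "x \<in> V l" by blast
        then obtain i where i: "i < q" "fst x \<in> VV i k" "snd x = i" unfolding V_def tg_def by auto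
        from x(2) obtain i' where i': "i' < q" "fst x \<in> VV i' l" "snd x = i'" unfolding V_def tg_def by auto
        have "VV i k \<inter> VV i l = {}" using VV[OF i(1)] \<open>k < r\<close> \<open>l < r\<close> \<open>k \<noteq> l\<close> by blast
        then show False using i i' by blast
      qed
    qed
    have e: "\<forall>e\<in>H. e \<subseteq> (\<Union>k<r. V k) \<and> (\<forall>k<r. card (e \<inter> V k) = 1)"
    proof
      fix e assume "e \<in> H"
      then obtain i a where ia: "i < q" "a \<in> HH i" "e = tg i a" unfolding H_def by blast
      have asub: "a \<subseteq> (\<Union>k<r. VV i k)" using VV[OF ia(1)] ia(2) by blast
      have "e \<subseteq> (\<Union>k<r. V k)" unfolding V_def ia(3) by (rule tg_sub_UN[where B=VV, OF ia(1) asub])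
      moreover have "\<forall>k<r. card (e \<inter> V k) = 1"
      proof (intro allI impI)
        fix k assume "k < r"
        have "e \<inter> V k = tg i (a \<inter> VV i k)" using ia tg_int_UN[of i q a] unfolding V_def by simp
        moreover have "card (a \<inter> VV i k) = 1" using VV[OF ia(1)] ia(2) \<open>k < r\<close> by blast
        ultimately show "card (e \<inter> V k) = 1" using ia(3) card_tg by metis
      qed
      ultimately show "e \<subseteq> (\<Union>k<r. V k) \<and> (\<forall>k<r. card (e \<inter> V k) = 1)" by blast
    qed
    show ?thesis unfolding r_partite_uniform_def using d e by blast
  qed
  have mc: "matching_collection H n Ms (\<Sum>i<q. t i)"
    unfolding matching_collection_def
  proof (intro allI impI conjI)
    fix j assume j: "j < n"
    show "Ms j \<subseteq> H" using HM j unfolding Ms_def H_def matching_collection_def by blast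
    show "matching (Ms j)" unfolding matching_def
    proof (intro ballI impI)
      fix e f assume "e \<in> Ms j" "f \<in> Ms j" "e \<noteq> f"
      then obtain i a k b where "i < q" "a \<in> MM i j" "e = tg i a" "k < q" "b \<in> MM k j" "f = tg k b"
        unfolding Ms_def by blast
      then show "e \<inter> f = {}"
      proof (cases "i = k")
        case True
        then have "a \<noteq> b" using \<open>e \<noteq> f\<close> \<open>e = tg i a\<close> \<open>f = tg k b\<close> by blast
        then have "a \<inter> b = {}" using HM \<open>i < q\<close> j \<open>a \<in> MM i j\<close> \<open>b \<in> MM k j\<close> True
          unfolding matching_collection_def matching_def by blast
        then show ?thesis using True tg_int \<open>e = tg i a\<close> \<open>f = tg k b\<close> unfolding tg_def by auto
      next
        case False
        then show ?thesis using \<open>e = tg i a\<close> \<open>f = tg k b\<close> unfolding tg_def by auto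
      qed
    qed
    have fin: "\<And>i. i < q \<Longrightarrow> finite (MM i j)" using HM j unfolding matching_collection_def by blast
    show "finite (Ms j)" unfolding Ms_def using fin by blast
    have "card (Ms j) = (\<Sum>i<q. card (tg i ` MM i j))" unfolding Ms_def
    proof (rule card_UN_disjoint)
      show "finite {..<q}" by simp
      show "\<forall>i\<in>{..<q}. finite (tg i ` MM i j)" using fin by blast
      show "\<forall>i\<in>{..<q}. \<forall>k\<in>{..<q}. i \<noteq> k \<longrightarrow> tg i ` MM i j \<inter> tg k ` MM k j = {}"
      proof (intro ballI impI)
        fix i k assume ik: "i \<in> {..<q}" "k \<in> {..<q}" "i \<noteq> k"
        show "tg i ` MM i j \<inter> tg k ` MM k j = {}"
        proof (rule ccontr)
          assume "tg i ` MM i j \<inter> tg k ` MM k j \<noteq> {}"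
          then obtain a b where ab: "a \<in> MM i j" "b \<in> MM k j" "tg i a = tg k b" by blast
          have "a \<noteq> {}" using ne ik(1) j ab(1) by blast
          then show False using tg_eq[OF ab(3)] ik(3) by blast
        qed
      qed
    qed
    also have "\<dots> = (\<Sum>i<q. t i)"
    proof (rule sum.cong)
      fix i assume "i \<in> {..<q}"
      then show "card (tg i ` MM i j) = t i"
      proof -
        have "card (tg i ` MM i j) = card (MM i j)"
          by (rule card_image[OF inj_on_subset[OF tg_inj subset_UNIV]])
        moreover have "card (MM i j) = t i" using HM \<open>i \<in> {..<q}\<close> j
          unfolding matching_collection_def by blast
        ultimately show ?thesis by simp
      qed
    qed simp
    finally show "card (Ms j) = (\<Sum>i<q. t i)" .
  qed
  have nr: "\<not> has_rainbow_matching_of_size n Ms ((\<Sum>i<q. t i) + 1 - q)"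
  proof
    assume "has_rainbow_matching_of_size n Ms ((\<Sum>i<q. t i) + 1 - q)"
    then obtain M where M0: "rainbow_matching n Ms M" "finite M" "card M = (\<Sum>i<q. t i) + 1 - q"
      unfolding has_rainbow_matching_of_size_def by blast
    have M12: "matching M" "M \<subseteq> (\<Union>j<n. Ms j)"
      "\<exists>\<phi> :: ('v \<times> nat) set \<Rightarrow> nat. inj_on \<phi> M \<and> (\<forall>e\<in>M. \<phi> e < n \<and> e \<in> Ms (\<phi> e))"
      using M0(1) unfolding rainbow_matching_def by simp_all
    obtain \<phi> where ph: "inj_on \<phi> M" "\<forall>e\<in>M. \<phi> e < n \<and> e \<in> Ms (\<phi> e)"
      using M12(3) by blast
    note M = M12(1,2) ph M0(2,3)
    define Mi where "Mi = (\<lambda>i. {e\<in>M. \<exists>a. a \<in> MM i (\<phi> e) \<and> e = tg i a})"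
    have "M = (\<Union>i<q. Mi i)"
    proof
      show "(\<Union>i<q. Mi i) \<subseteq> M" unfolding Mi_def by blast
      show "M \<subseteq> (\<Union>i<q. Mi i)"
      proof
        fix e assume e: "e \<in> M"
        then have "e \<in> Ms (\<phi> e)" using M(4) by blast
        then obtain i a where "i < q" "a \<in> MM i (\<phi> e)" "e = tg i a" unfolding Ms_def by blast
        then have "e \<in> Mi i" unfolding Mi_def using e by blast
        then show "e \<in> (\<Union>i<q. Mi i)" using \<open>i < q\<close> by blast
      qed
    qed
    then have "card M \<le> (\<Sum>i<q. card (Mi i))" using card_UN_le by (metis finite_lessThan)
    have "\<exists>i<q. card (Mi i) \<ge> t i"
    proof (rule ccontr)
      assume "\<not> ?thesis"
      then have "\<And>i. i < q \<Longrightarrow> card (Mi i) + 1 \<le> t i" by force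
      then have "(\<Sum>i<q. card (Mi i) + 1) \<le> (\<Sum>i<q. t i)" by (meson lessThan_iff sum_mono)
      then have "(\<Sum>i<q. card (Mi i)) + q \<le> (\<Sum>i<q. t i)" using sum.distrib[of "\<lambda>i. card (Mi i)" "\<lambda>i. 1" "{..<q}"] by simp
      then show False using \<open>card M \<le> _\<close> M(6) assms(3) by linarith
    qed
    then obtain i where i: "i < q" "card (Mi i) \<ge> t i" by blast
    define N where "N = (\<lambda>e. fst ` e) ` Mi i"
    have Mi_prop: "e \<in> M \<and> fst ` e \<in> MM i (\<phi> e) \<and> e = tg i (fst ` e) \<and> \<phi> e < n"
      if em: "e \<in> Mi i" for e
    proof -
      obtain a where a: "e \<in> M" "a \<in> MM i (\<phi> e)" "e = tg i a" using em unfolding Mi_def by blast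
      have "fst ` e = a" using a(3) fst_tg by simp
      then show ?thesis using a M(4) by simp
    qed
    have inj: "inj_on (\<lambda>e. fst ` e) (Mi i)"
      by (rule inj_onI) (metis Mi_prop)
    have finMi: "finite (Mi i)" unfolding Mi_def using M(5) by simp
    have cN: "card N = card (Mi i)" unfolding N_def using card_image[OF inj] .
    have "rainbow_matching n (MM i) N"
      unfolding rainbow_matching_def
    proof (intro conjI)
      show "matching N" unfolding matching_def N_def
      proof (intro ballI impI)
        fix a b assume "a \<in> (\<lambda>e. fst ` e) ` Mi i" "b \<in> (\<lambda>e. fst ` e) ` Mi i" "a \<noteq> b"
        then obtain e f where "e \<in> Mi i" "f \<in> Mi i" "a = fst ` e" "b = fst ` f" by blast
        then have "e \<noteq> f" using \<open>a \<noteq> b\<close> by blast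
        then have "e \<inter> f = {}" using M(1) Mi_prop \<open>e \<in> Mi i\<close> \<open>f \<in> Mi i\<close>
          unfolding matching_def by blast
        then show "a \<inter> b = {}" using \<open>a = fst ` e\<close> \<open>b = fst ` f\<close> Mi_prop \<open>e \<in> Mi i\<close> \<open>f \<in> Mi i\<close>
          by (metis fst_tg tg_int image_empty)
      qed
      show "N \<subseteq> (\<Union>j<n. MM i j)" unfolding N_def using Mi_prop by blast
      show "\<exists>\<psi>. inj_on \<psi> N \<and> (\<forall>a\<in>N. \<psi> a < n \<and> a \<in> MM i (\<psi> a))"
      proof (intro exI conjI)
        show "inj_on (\<lambda>a. \<phi> (tg i a)) N"
        proof (rule inj_onI)
          fix a b assume "a \<in> N" "b \<in> N" "\<phi> (tg i a) = \<phi> (tg i b)"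
          then obtain e f where "e \<in> Mi i" "f \<in> Mi i" "a = fst ` e" "b = fst ` f" unfolding N_def by blast
          then show "a = b" using \<open>\<phi> (tg i a) = \<phi> (tg i b)\<close> Mi_prop M(3)
            by (metis inj_onD)
        qed
        show "\<forall>a\<in>N. \<phi> (tg i a) < n \<and> a \<in> MM i (\<phi> (tg i a))"
          unfolding N_def using Mi_prop by fastforce
      qed
    qed
    then have "has_rainbow_matching_of_size n (MM i) (t i)"
      using has_rainbow_le cN i finMi N_def by (metis finite_imageI)
    then show False using HM i by blast
  qed
  show ?thesis using rp mc nr by blast
qed

end
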